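(* Let $n$ be a positive integer and let $z$ be a complex number such that all denominators below are nonzero. Then $$\sum_{k=1}^n\binom{2k}{k}(3k-2n+z)\,\frac{\prod_{j=1}^{k-1}(j-n)(j-n+z)}{\prod_{j=1}^{k}(j^2-z^2)}=\frac{2}{n-z},$$ and $$\sum_{k=n}^{\infty}\frac{3k-2n+z}{k\binom{2k}{k}}\cdot\frac{\prod_{j=1}^{k-1}(j^2-z^2)}{\prod_{j=1,\,j\neq n}^{k}(j-n)(j-n+z)}=1.$$ *)

theory Defs
  imports Complex_Main
begin

end

theory Submission
  imports Defs "HOL-Computational_Algebra.Formal_Power_Series"
begin

unbundle fps_syntax

definition bb :: "complex \<Rightarrow> nat \<Rightarrow> complex" where
  "bb z i = 1 / (fact i * pochhammer (1 - z) i)"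

definition al :: "complex \<Rightarrow> nat \<Rightarrow> complex" where
  "al z k = of_nat ((2*k) choose k) / (pochhammer (1 - z) k * pochhammer (1 + z) k)"

lemma bb_rec:
  assumes "pochhammer (1 - z) (Suc i) \<noteq> 0"
  shows "bb z (Suc i) * (of_nat (Suc i) * (of_nat (Suc i) - z)) = bb z i"
proof -
  have p: "pochhammer (1 - z) (Suc i) = pochhammer (1 - z) i * (of_nat (Suc i) - z)"
    by (simp add: pochhammer_Suc)
  have f: "fact (Suc i) = (of_nat (Suc i) :: complex) * fact i" by simp
  have e: "fact (Suc i) * pochhammer (1 - z) (Suc i) = (fact i * pochhammer (1 - z) i) * (of_nat (Suc i) * (of_nat (Suc i) - z))"
    unfolding p f by (simp only: mult_ac)
  have s1: "(1 + of_nat i :: complex) \<noteq> 0" by (metis of_nat_Suc of_nat_neq_0)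
  have L: "fact (Suc i) * pochhammer (1 - z) (Suc i) \<noteq> 0" using assms s1 by simp
  have "fact i * pochhammer (1 - z) i \<noteq> 0" "(of_nat (Suc i) * (of_nat (Suc i) - z)) \<noteq> (0::complex)"
    using L unfolding e by auto
  moreover have gen: "\<And>X Y::complex. X\<noteq>0 \<Longrightarrow> Y\<noteq>0 \<Longrightarrow> 1/(X*Y)*Y = 1/X" by simp
  ultimately show ?thesis unfolding bb_def e by (intro gen)
qed

lemma bb_neg_rec:
  assumes "pochhammer (1 + z) (Suc i) \<noteq> 0"
  shows "bb (-z) (Suc i) * (of_nat (Suc i) * (of_nat (Suc i) + z)) = bb (-z) i"
  using bb_rec[of "-z" i] assms by simp

lemma wr_sum:
  assumes m: "1 \<le> m"
    and nz: "\<And>i. i \<le> m \<Longrightarrow> pochhammer (1 - z) i \<noteq> 0 \<and> pochhammer (1 + z) i \<noteq> 0"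
  shows "(\<Sum>k=0..m. bb (-z) k * bb z (m-k) * (of_nat k - of_nat (m-k) + z)) = 0"
proof -
  define v where "v k = of_nat k * (of_nat k + z) * bb (-z) k * bb z (m-k)" for k
  define w where "w k = of_nat (m-k) * (of_nat (m-k) - z) * bb (-z) k * bb z (m-k)" for k
  have vw: "w k = v (Suc k)" if "k < m" for k
  proof -
    have m1: "m - k = Suc (m - Suc k)" using that by simp
    have "bb z (m-k) * (of_nat (m-k) * (of_nat (m-k) - z)) = bb z (m - Suc k)"
      using bb_rec[of z "m - Suc k"] nz[of "m-k"] m1 by simp
    moreover have "bb (-z) (Suc k) * (of_nat (Suc k) * (of_nat (Suc k) + z)) = bb (-z) k"
      using bb_neg_rec[of z k] nz[of "Suc k"] that by simp
    moreover have "w k = bb (-z) k * (bb z (m-k) * (of_nat (m-k) * (of_nat (m-k) - z)))"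
      unfolding w_def by (simp only: mult_ac)
    moreover have "v (Suc k) = (bb (-z) (Suc k) * (of_nat (Suc k) * (of_nat (Suc k) + z))) * bb z (m - Suc k)"
      unfolding v_def by (simp only: mult_ac)
    ultimately show ?thesis by simp
  qed
  have eq: "of_nat m * (bb (-z) k * bb z (m-k) * (of_nat k - of_nat (m-k) + z)) = v k - w k"
    if "k \<le> m" for k
  proof -
    have "of_nat (m-k) = (of_nat m - of_nat k :: complex)" using that by (simp add: of_nat_diff)
    then show ?thesis unfolding v_def w_def by (simp only:) (simp add: algebra_simps power2_eq_square)
  qed
  obtain m' where m': "m = Suc m'" using m by (cases m) auto
  have "of_nat m * (\<Sum>k=0..m. bb (-z) k * bb z (m-k) * (of_nat k - of_nat (m-k) + z))
      = (\<Sum>k\<le>m. v k - w k)"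
    unfolding sum_distrib_left atLeast0AtMost by (intro sum.cong refl eq) simp
  also have "\<dots> = (\<Sum>k\<le>m. v k) - (\<Sum>k\<le>m. w k)" by (simp add: sum_subtractf)
  also have "(\<Sum>k\<le>m. v k) = v 0 + (\<Sum>k\<le>m'. v (Suc k))" unfolding m' by (rule sum.atMost_Suc_shift)
  also have "v 0 = 0" unfolding v_def by simp
  also have "(\<Sum>k\<le>m'. v (Suc k)) = (\<Sum>k\<le>m'. w k)" using vw m' by (intro sum.cong) auto
  also have "(\<Sum>k\<le>m. w k) = (\<Sum>k\<le>m'. w k) + w m" unfolding m' by simp
  also have "w m = 0" unfolding w_def by simp
  finally have "of_nat m * (\<Sum>k=0..m. bb (-z) k * bb z (m-k) * (of_nat k - of_nat (m-k) + z)) = 0"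
    by simp
  then show ?thesis using m by simp
qed

lemma vander_aux:
  fixes z :: complex
  shows "pochhammer (of_nat k + 1) k =
    (\<Sum>i\<le>k. of_nat (k choose i) * pochhammer (of_nat k + z - of_nat i + 1) i * pochhammer (1 - z + of_nat i) (k-i))"
proof -
  have V: "pochhammer (-(of_nat k + z) + -(of_nat k - z)) k =
     (\<Sum>i\<le>k. of_nat (k choose i) * pochhammer (-(of_nat k + z)) i * pochhammer (-(of_nat k - z)) (k-i))"
    by (rule pochhammer_binomial_sum)
  have l: "pochhammer (-(of_nat k + z) + -(of_nat k - z)) k = (-1)^k * pochhammer (of_nat k + 1) k"
  proof -
    have "-(of_nat k + z) + -(of_nat k - z) = - (of_nat (2*k) :: complex)" by simp
    then show ?thesis by (simp add: pochhammer_minus of_nat_diff)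
  qed
  have r: "of_nat (k choose i) * pochhammer (-(of_nat k + z)) i * pochhammer (-(of_nat k - z)) (k-i)
     = (-1)^k * (of_nat (k choose i) * pochhammer (of_nat k + z - of_nat i + 1) i * pochhammer (1 - z + of_nat i) (k-i))"
    if "i \<le> k" for i
  proof -
    have a: "pochhammer (-(of_nat k + z)) i = (-1)^i * pochhammer (of_nat k + z - of_nat i + 1) i"
      by (rule pochhammer_minus)
    have b: "pochhammer (-(of_nat k - z)) (k-i) = (-1)^(k-i) * pochhammer (1 - z + of_nat i) (k-i)"
    proof -
      have "pochhammer (-(of_nat k - z)) (k-i) = (-1)^(k-i) * pochhammer ((of_nat k - z) - of_nat (k-i) + 1) (k-i)"
        by (rule pochhammer_minus)
      moreover have "(of_nat k - z) - of_nat (k-i) + 1 = 1 - z + of_nat i" using that by (simp add: of_nat_diff)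
      ultimately show ?thesis by simp
    qed
    have c: "(-1::complex)^i * (-1)^(k-i) = (-1)^k"
      using that by (simp add: power_add[symmetric])
    show ?thesis unfolding a b using c by (simp add: algebra_simps)
  qed
  have "(-1)^k * pochhammer (of_nat k + 1) k = (-1::complex)^k *
    (\<Sum>i\<le>k. of_nat (k choose i) * pochhammer (of_nat k + z - of_nat i + 1) i * pochhammer (1 - z + of_nat i) (k-i))"
    unfolding l[symmetric] V sum_distrib_left by (intro sum.cong refl r) simp
  then show ?thesis by simp
qed

lemma clausen:
  assumes nz: "\<And>i. i \<le> k \<Longrightarrow> pochhammer (1 - z) i \<noteq> 0 \<and> pochhammer (1 + z) i \<noteq> 0"
  shows "(\<Sum>i=0..k. bb z i * bb (-z) (k-i)) = al z k"
proof -
  define N where "N = fact k * pochhammer (1 - z) k * pochhammer (1 + z) k"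
  have N0: "N \<noteq> 0" using nz[of k] unfolding N_def by simp
  have trm: "N * (bb z i * bb (-z) (k-i)) =
      of_nat (k choose i) * pochhammer (of_nat k + z - of_nat i + 1) i * pochhammer (1 - z + of_nat i) (k-i)"
    if i: "i \<le> k" for i
  proof -
    have P: "pochhammer (1 - z) k = pochhammer (1 - z) i * pochhammer (1 - z + of_nat i) (k-i)"
      using pochhammer_product[OF i, of "1-z"] by simp
    have M: "pochhammer (1 + z) k = pochhammer (1 + z) (k-i) * pochhammer (of_nat k + z - of_nat i + 1) i"
    proof -
      have A: "pochhammer (1 + z) k = pochhammer (1 + z) (k-i) * pochhammer (1 + z + of_nat (k-i)) (k - (k-i))"
        by (rule pochhammer_product) simp
      have B: "1 + z + of_nat (k-i) = of_nat k + z - of_nat i + 1" using i by (simp add: of_nat_diff)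
      have C: "k - (k-i) = i" using i by simp
      from A show ?thesis by (simp only: B C)
    qed
    have F: "(fact k :: complex) = of_nat (k choose i) * fact i * fact (k-i)"
      using i by (simp add: binomial_fact)
    have n1: "pochhammer (1 - z) i \<noteq> 0" "pochhammer (1 + z) (k-i) \<noteq> 0" using nz i by auto
    show ?thesis unfolding N_def bb_def P M F using n1 by (simp add: field_simps)
  qed
  have "N * (\<Sum>i=0..k. bb z i * bb (-z) (k-i)) = pochhammer (of_nat k + 1) k"
    unfolding sum_distrib_left vander_aux[of k z] atLeast0AtMost by (intro sum.cong refl trm) simp
  moreover have "N * al z k = pochhammer (of_nat k + 1) k"
  proof -
    have "(fact (2*k) :: complex) = fact k * pochhammer (of_nat k + 1) k"
      using pochhammer_product'[of "1::complex" k k] by (simp add: pochhammer_fact mult_2 add.commute)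
    moreover have "(of_nat ((2*k) choose k) :: complex) = fact (2*k) / (fact k * fact k)"
      by (simp add: binomial_fact mult_2)
    ultimately show ?thesis unfolding N_def al_def using nz[of k] by (simp add: field_simps)
  qed
  ultimately show ?thesis using N0 by (metis mult_left_cancel)
qed


definition th :: "complex fps \<Rightarrow> complex fps" where
  "th f = Abs_fps (\<lambda>m. of_nat m * f $ m)"

lemma th_nth [simp]: "th f $ m = of_nat m * f $ m"
  unfolding th_def by simp

lemma th_mult: "th (f * g) = th f * g + f * th g"
proof (rule fps_ext)
  fix m
  have "th (f * g) $ m = (\<Sum>i=0..m. of_nat m * (f $ i * g $ (m - i)))"
    by (simp add: fps_mult_nth sum_distrib_left)
  also have "\<dots> = (\<Sum>i=0..m. of_nat i * f $ i * g $ (m - i) + f $ i * (of_nat (m - i) * g $ (m - i)))"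
  proof (intro sum.cong refl)
    fix i assume "i \<in> {0..m}"
    then have "(of_nat m :: complex) = of_nat i + of_nat (m - i)" by (simp add: of_nat_diff)
    then show "of_nat m * (f $ i * g $ (m - i)) = of_nat i * f $ i * g $ (m - i) + f $ i * (of_nat (m - i) * g $ (m - i))"
      by (simp add: algebra_simps)
  qed
  also have "\<dots> = (th f * g + f * th g) $ m"
    by (simp add: fps_mult_nth sum.distrib)
  finally show "th (f * g) $ m = (th f * g + f * th g) $ m" .
qed

lemma core1:
  assumes nz: "\<And>i. i \<le> n \<Longrightarrow> pochhammer (1 - z) i \<noteq> 0 \<and> pochhammer (1 + z) i \<noteq> 0"
  shows "(\<Sum>k=0..n. al z k * bb z (n-k) * (of_nat k - 2 * of_nat (n-k) + z)) = z * bb z n"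
proof -
  define B where "B = Abs_fps (bb z)"
  define C where "C = Abs_fps (bb (-z))"
  define A where "A = B * C"
  define W where "W = th C * B - C * th B + fps_const z * (C * B)"
  have A_nth: "A $ k = al z k" if "k \<le> n" for k
    unfolding A_def B_def C_def fps_mult_nth using clausen[of k z] nz that by simp
  have W0: "W $ 0 = z" unfolding W_def B_def C_def by (simp add: bb_def)
  have Wm: "W $ m = 0" if "1 \<le> m" "m \<le> n" for m
  proof -
    have "W $ m = (\<Sum>k=0..m. of_nat k * bb (-z) k * bb z (m-k)) - (\<Sum>k=0..m. bb (-z) k * (of_nat (m-k) * bb z (m-k)))
        + z * (\<Sum>k=0..m. bb (-z) k * bb z (m-k))"
      unfolding W_def B_def C_def by (simp only: fps_sub_nth fps_add_nth fps_mult_left_const_nth) (simp add: fps_mult_nth)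
    also have "\<dots> = (\<Sum>k=0..m. bb (-z) k * bb z (m-k) * (of_nat k - of_nat (m-k) + z))"
      by (simp only: sum_subtractf[symmetric] sum_distrib_left sum.distrib[symmetric]) (simp add: algebra_simps)
    also have "\<dots> = 0" using wr_sum[of m z] that nz by simp
    finally show ?thesis .
  qed
  have id: "th A * B - fps_const 2 * (A * th B) + fps_const z * (A * B) = B * W"
    unfolding A_def W_def th_mult by (simp add: algebra_simps fps_numeral_fps_const[symmetric])
  have "(th A * B - fps_const 2 * (A * th B) + fps_const z * (A * B)) $ n
      = (\<Sum>k=0..n. al z k * bb z (n-k) * (of_nat k - 2 * of_nat (n-k) + z))"
  proof -
    have "(th A * B - fps_const 2 * (A * th B) + fps_const z * (A * B)) $ n =
      (\<Sum>k=0..n. of_nat k * A $ k * B $ (n-k)) - 2 * (\<Sum>k=0..n. A $ k * (of_nat (n-k) * B $ (n-k)))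
       + z * (\<Sum>k=0..n. A $ k * B $ (n-k))"
      by (simp only: fps_sub_nth fps_add_nth fps_mult_left_const_nth) (simp add: fps_mult_nth)
    also have "\<dots> = (\<Sum>k=0..n. al z k * bb z (n-k) * (of_nat k - 2 * of_nat (n-k) + z))"
      by (simp only: sum_subtractf[symmetric] sum_distrib_left sum.distrib[symmetric])
         (intro sum.cong refl, simp add: A_nth B_def algebra_simps)
    finally show ?thesis .
  qed
  moreover have "(B * W) $ n = z * bb z n"
  proof -
    have "(B * W) $ n = (\<Sum>i=0..n. if i = n then bb z n * z else 0)"
      unfolding fps_mult_nth
    proof (intro sum.cong refl)
      fix i assume i: "i \<in> {0..n}"
      show "B $ i * W $ (n - i) = (if i = n then bb z n * z else 0)"
      proof (cases "i = n")
        case True then show ?thesis using W0 by (simp add: B_def)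
      next
        case False then show ?thesis using Wm[of "n-i"] i by simp
      qed
    qed
    also have "\<dots> = z * bb z n" by simp
    finally show ?thesis .
  qed
  ultimately show ?thesis using id by simp
qed


lemma Qprod:
  fixes z :: complex
  shows "(\<Prod>j=1..k. (of_nat j)^2 - z^2) = pochhammer (1 - z) k * pochhammer (1 + z) k"
proof (induction k)
  case 0 then show ?case by simp
next
  case (Suc k)
  have "(\<Prod>j=1..Suc k. (of_nat j)^2 - z^2) = ((of_nat (Suc k))^2 - z^2) * (\<Prod>j=1..k. (of_nat j)^2 - z^2)"
    by (simp add: prod.nat_ivl_Suc' mult_ac)
  also have "\<dots> = pochhammer (1 - z) (Suc k) * pochhammer (1 + z) (Suc k)"
  proof -
    have f: "(of_nat (Suc k))^2 - z^2 = (1 - z + of_nat k) * (1 + z + of_nat k)"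
      by (simp add: power2_eq_square ring_distribs of_nat_Suc)
    show ?thesis unfolding Suc.IH f pochhammer_Suc by (simp only: mult_ac)
  qed
  finally show ?case .
qed

lemma Pprod:
  assumes nz: "\<And>i. i \<le> n \<Longrightarrow> pochhammer (1 - z) i \<noteq> 0"
  shows "k' < n \<Longrightarrow> (\<Prod>j=1..k'. (of_nat j - of_nat n) * (of_nat j - of_nat n + z)) * bb z (n-1) = bb z (n - Suc k')"
proof (induction k')
  case 0 then show ?case by simp
next
  case (Suc k')
  have IH: "(\<Prod>j=1..k'. (of_nat j - of_nat n) * (of_nat j - of_nat n + z)) * bb z (n-1) = bb z (n - Suc k')"
    using Suc by simp
  define i where "i = n - Suc (Suc k')"
  have si: "Suc i = n - Suc k'" using Suc.prems unfolding i_def by simp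
  have r: "bb z (Suc i) * (of_nat (Suc i) * (of_nat (Suc i) - z)) = bb z i"
    by (rule bb_rec) (use nz si in auto)
  have e: "(of_nat (Suc k') - of_nat n) * (of_nat (Suc k') - of_nat n + z) = (of_nat (Suc i) * (of_nat (Suc i) - z) :: complex)"
  proof -
    have s2: "(of_nat (Suc i) :: complex) = of_nat n - of_nat (Suc k')" unfolding si using Suc.prems by (simp add: of_nat_diff)
    show ?thesis unfolding s2 by (simp add: algebra_simps)
  qed
  have "(\<Prod>j=1..Suc k'. (of_nat j - of_nat n) * (of_nat j - of_nat n + z)) * bb z (n-1)
     = ((of_nat (Suc k') - of_nat n) * (of_nat (Suc k') - of_nat n + z)) * ((\<Prod>j=1..k'. (of_nat j - of_nat n) * (of_nat j - of_nat n + z)) * bb z (n-1))"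
    by (simp add: prod.nat_ivl_Suc' mult_ac)
  also have "\<dots> = bb z i" unfolding IH e si[symmetric] using r by (simp add: mult_ac)
  finally show ?case unfolding i_def .
qed

lemma part1:
  fixes n :: nat and z :: complex
  assumes "n \<ge> 1"
  assumes H: "\<forall>j\<in>{1..n}. (of_nat j)^2 - z^2 \<noteq> 0"
  shows "(\<Sum>k=1..n. of_nat ((2*k) choose k) * (3 * of_nat k - 2 * of_nat n + z) *
          ((\<Prod>j=1..k-1. (of_nat j - of_nat n) * (of_nat j - of_nat n + z)) /
           (\<Prod>j=1..k. (of_nat j)^2 - z^2)))
      = 2 / (of_nat n - z)"
proof -
  have nz: "pochhammer (1 - z) i \<noteq> 0 \<and> pochhammer (1 + z) i \<noteq> 0" if "i \<le> n" for i
  proof (rule conjI; rule notI)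
    assume "pochhammer (1 - z) i = 0"
    then obtain k where k: "k < i" "1 - z = - of_nat k" by (auto simp: pochhammer_eq_0_iff)
    then have "z = of_nat (Suc k)" by (simp add: algebra_simps)
    then show False using H[rule_format, of "Suc k"] k that by auto
  next
    assume "pochhammer (1 + z) i = 0"
    then obtain k where k: "k < i" "1 + z = - of_nat k" by (auto simp: pochhammer_eq_0_iff)
    have "z = (1 + z) - 1" by simp
    also have "\<dots> = - of_nat (Suc k)" unfolding k(2) by simp
    finally have zz: "z = - of_nat (Suc k)" .
    have "(of_nat (Suc k))^2 - z^2 = 0" unfolding zz by (simp add: power2_eq_square) algebra
    then show False using H[rule_format, of "Suc k"] k that by auto
  qed
  have bnz: "bb z i \<noteq> 0" if "i \<le> n" for i using nz[OF that] unfolding bb_def by simp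
  obtain n' where n': "n = Suc n'" using assms(1) by (cases n) auto
  have trm: "of_nat ((2*k) choose k) * (3 * of_nat k - 2 * of_nat n + z) *
          ((\<Prod>j=1..k-1. (of_nat j - of_nat n) * (of_nat j - of_nat n + z)) /
           (\<Prod>j=1..k. (of_nat j)^2 - z^2))
      = (al z k * bb z (n-k) * (of_nat k - 2 * of_nat (n-k) + z)) / bb z (n-1)"
    if k: "k \<in> {1..n}" for k
  proof -
    have P: "(\<Prod>j=1..k-1. (of_nat j - of_nat n) * (of_nat j - of_nat n + z)) = bb z (n-k) / bb z (n-1)"
      using Pprod[of n z "k-1"] nz k bnz[of "n-1"] by (auto simp: field_simps)
    have w: "(of_nat k - 2 * of_nat (n-k) + z) = (3 * of_nat k - 2 * of_nat n + z :: complex)"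
      using k by (simp add: of_nat_diff algebra_simps)
    show ?thesis unfolding P Qprod w al_def by (simp add: field_simps)
  qed
  have "(\<Sum>k=0..n. al z k * bb z (n-k) * (of_nat k - 2 * of_nat (n-k) + z)) = z * bb z n"
    using core1[of n z] nz by blast
  moreover have "(\<Sum>k=0..n. al z k * bb z (n-k) * (of_nat k - 2 * of_nat (n-k) + z))
     = bb z n * (z - 2 * of_nat n) + (\<Sum>k=1..n. al z k * bb z (n-k) * (of_nat k - 2 * of_nat (n-k) + z))"
    by (subst sum.atLeast_Suc_atMost) (auto simp: al_def)
  ultimately have S: "(\<Sum>k=1..n. al z k * bb z (n-k) * (of_nat k - 2 * of_nat (n-k) + z)) = 2 * of_nat n * bb z n"
    by (simp add: algebra_simps)
  have r: "bb z n * (of_nat n * (of_nat n - z)) = bb z n'"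
    unfolding n' by (rule bb_rec) (use nz n' in auto)
  have "(\<Sum>k=1..n. of_nat ((2*k) choose k) * (3 * of_nat k - 2 * of_nat n + z) *
          ((\<Prod>j=1..k-1. (of_nat j - of_nat n) * (of_nat j - of_nat n + z)) /
           (\<Prod>j=1..k. (of_nat j)^2 - z^2)))
     = (\<Sum>k=1..n. al z k * bb z (n-k) * (of_nat k - 2 * of_nat (n-k) + z)) / bb z (n-1)"
    unfolding sum_divide_distrib by (intro sum.cong refl trm)
  also have "\<dots> = 2 * of_nat n * bb z n / (bb z n * (of_nat n * (of_nat n - z)))"
    unfolding S using r n' by simp
  also have "\<dots> = 2 / (of_nat n - z)"
  proof -
    have "(of_nat n)^2 - z^2 \<noteq> 0" using H assms(1) by auto
    then have nz2: "of_nat n - z \<noteq> 0" by (auto simp: power2_eq_square)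
    show ?thesis using bnz[of n] assms(1) nz2 by (simp add: field_simps)
  qed
  finally show ?thesis .
qed

definition pin :: "nat \<Rightarrow> complex \<Rightarrow> nat \<Rightarrow> complex" where
  "pin n z k = (\<Prod>i\<in>{1..<n}. (of_nat k - of_nat i) * (of_nat k - of_nat i + z))"

definition hh :: "complex \<Rightarrow> nat \<Rightarrow> complex" where
  "hh z k = pochhammer (1 - z) (k - 1) * fact k / fact (2*k)"

definition Dn :: "nat \<Rightarrow> complex \<Rightarrow> complex" where
  "Dn n z = (\<Prod>m\<in>{1..<n}. of_nat m * (of_nat m - z))"

definition ss :: "nat \<Rightarrow> complex \<Rightarrow> nat \<Rightarrow> complex" where
  "ss n z k = (3 * of_nat k - 2 * of_nat n + z) * pin n z k * hh z k / Dn n z"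

definition ff :: "nat \<Rightarrow> complex \<Rightarrow> nat \<Rightarrow> complex" where
  "ff n z k = (if k = 0 then 0 else ss n z k)"

lemma pin_Suc: "1 \<le> n \<Longrightarrow> pin (Suc n) z k = pin n z k * ((of_nat k - of_nat n) * (of_nat k - of_nat n + z))"
  unfolding pin_def by (simp add: prod.atLeastLessThan_Suc)

lemma pin_le1: "n \<le> 1 \<Longrightarrow> pin n z k = 1"
  unfolding pin_def by simp

lemma Dn_Suc: "1 \<le> n \<Longrightarrow> Dn (Suc n) z = Dn n z * (of_nat n * (of_nat n - z))"
  unfolding Dn_def by (simp add: prod.atLeastLessThan_Suc)

lemma pin_shift: "1 \<le> n \<Longrightarrow> pin (Suc n) z (Suc k) = of_nat k * (of_nat k + z) * pin n z k"
proof (induction n rule: nat_induct_at_least)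
  case base
  then show ?case by (simp add: pin_Suc pin_le1)
next
  case (Suc n)
  have "pin (Suc (Suc n)) z (Suc k) = pin (Suc n) z (Suc k) * ((of_nat (Suc k) - of_nat (Suc n)) * (of_nat (Suc k) - of_nat (Suc n) + z))"
    by (rule pin_Suc) simp
  also have "\<dots> = of_nat k * (of_nat k + z) * (pin n z k * ((of_nat k - of_nat n) * (of_nat k - of_nat n + z)))"
    unfolding Suc.IH by simp
  also have "\<dots> = of_nat k * (of_nat k + z) * pin (Suc n) z k"
    using pin_Suc[OF Suc.hyps, of z k] by simp
  finally show ?case .
qed

lemma pin_zero: "1 \<le> i \<Longrightarrow> i < n \<Longrightarrow> pin n z i = 0"
  unfolding pin_def by (rule prod_zero) auto

lemma hh_rec:
  assumes "1 \<le> m"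
  shows "of_nat (2*(2*m+1)) * hh z (Suc m) = (of_nat m - z) * hh z m"
proof -
  obtain m' where m': "m = Suc m'" using assms by (cases m) auto
  have p: "pochhammer (1 - z) m = pochhammer (1 - z) m' * (of_nat m - z)"
    unfolding m' by (simp add: pochhammer_Suc)
  have f1: "fact (Suc m) = (of_nat m + 1 :: complex) * fact m" by simp
  have f2: "fact (2 * Suc m) = ((2 * of_nat m + 2) * (2 * of_nat m + 1) :: complex) * fact (2*m)"
  proof -
    have "2 * Suc m = Suc (Suc (2*m))" by simp
    then show ?thesis by (simp add: algebra_simps)
  qed
  have h1: "hh z (Suc m) = pochhammer (1 - z) m' * (of_nat m - z) * ((of_nat m + 1) * fact m) / (((2 * of_nat m + 2) * (2 * of_nat m + 1)) * fact (2*m))"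
    unfolding hh_def f2 f1[symmetric] p[symmetric] by simp
  have h2: "hh z m = pochhammer (1 - z) m' * fact m / fact (2*m)"
    unfolding hh_def m' by simp
  have gen: "\<And>A F E (x::complex) q r. E \<noteq> 0 \<Longrightarrow> r \<noteq> 0 \<Longrightarrow> q \<noteq> 0 \<Longrightarrow>
     (2*r) * (A*x*(q*F)/(((2*q)*r)*E)) = x*(A*F/E)"
    by (simp add: field_simps)
  have n1: "(2 * of_nat m + 1 :: complex) \<noteq> 0" by (metis of_nat_Suc of_nat_mult of_nat_numeral add.commute of_nat_neq_0)
  have n2: "(of_nat m + 1 :: complex) \<noteq> 0" by (metis of_nat_Suc add.commute of_nat_neq_0)
  have e3: "(2 * of_nat m + 2 :: complex) = 2 * (of_nat m + 1)" by simp
  have eN: "of_nat (2*(2*m+1)) = (2*(2*of_nat m+1) :: complex)" by simp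
  show ?thesis unfolding h1 h2 e3 eN by (rule gen) (use n1 n2 in simp_all)
qed

lemma hh_shift:
  assumes "1 \<le> m"
  shows "(of_nat m - z) * hh z m = (1 - z) * hh (z - 1) m"
proof -
  obtain m' where m': "m = Suc m'" using assms by (cases m) auto
  have "(of_nat m - z) * pochhammer (1 - z) m' = pochhammer (1 - z) m"
    unfolding m' by (simp add: pochhammer_Suc algebra_simps)
  also have "\<dots> = (1 - z) * pochhammer (1 - (z - 1)) m'"
    unfolding m' pochhammer_rec by (simp add: algebra_simps)
  finally have e: "(of_nat m - z) * pochhammer (1 - z) m' = (1 - z) * pochhammer (1 - (z - 1)) m'" .
  have e2: "(of_nat (Suc m') - z) * pochhammer (1 - z) m' = (1 - z) * pochhammer (1 - (z - 1)) m'"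
    using e unfolding m' .
  show ?thesis unfolding hh_def m' using e2
    by (simp del: of_nat_Suc add: mult.assoc[symmetric])
qed


lemma PI_scalar:
  fixes k n z :: complex
  shows "(3*k - 2*(n+1) + z) * ((k - n) * (k - n + z)) - (n * (n - z)) * (3*k - 2*n + z)
     = -(k - z) * (k * (k + z)) + 2*(2*k - 1) * ((k - n) * (k - n + z))"
  by algebra

lemma ss_diff:
  assumes n: "1 \<le> n" and D: "Dn (Suc n) z \<noteq> 0"
  shows "(ss (Suc n) z k - ss n z k) * Dn (Suc n) z =
     hh z k * (-(of_nat k - z) * pin (Suc n) z (Suc k) + 2*(2*of_nat k - 1) * pin (Suc n) z k)"
proof -
  define c where "c = of_nat n * (of_nat n - z)"
  define X where "X = (of_nat k - of_nat n) * (of_nat k - of_nat n + z)"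
  define P where "P = pin n z k"
  define h where "h = hh z k"
  define D0 where "D0 = Dn n z"
  have DS: "Dn (Suc n) z = D0 * c" unfolding D0_def c_def using Dn_Suc[OF n] .
  have D0nz: "D0 \<noteq> 0" and cnz: "c \<noteq> 0" using D unfolding DS by auto
  have p1: "pin (Suc n) z k = P * X" unfolding P_def X_def using pin_Suc[OF n] .
  have p2: "pin (Suc n) z (Suc k) = of_nat k * (of_nat k + z) * P" unfolding P_def using pin_shift[OF n] .
  have s1: "ss (Suc n) z k = (3 * of_nat k - 2 * (of_nat n + 1) + z) * (P * X) * h / (D0 * c)"
    unfolding ss_def p1 DS h_def by simp
  have s2: "ss n z k = (3 * of_nat k - 2 * of_nat n + z) * P * h / D0"
    unfolding ss_def P_def h_def D0_def ..
  have "(ss (Suc n) z k - ss n z k) * Dn (Suc n) z =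
     h * P * ((3 * of_nat k - 2 * (of_nat n + 1) + z) * X - c * (3 * of_nat k - 2 * of_nat n + z))"
    unfolding s1 s2 DS using D0nz cnz by (simp add: field_simps)
  also have "\<dots> = h * P * (-(of_nat k - z) * (of_nat k * (of_nat k + z)) + 2*(2*of_nat k - 1) * X)"
    unfolding X_def c_def using PI_scalar[of "of_nat k" "of_nat n" z] by simp
  also have "\<dots> = h * (-(of_nat k - z) * pin (Suc n) z (Suc k) + 2*(2*of_nat k - 1) * pin (Suc n) z k)"
    unfolding p1 p2 by (simp add: algebra_simps)
  finally show ?thesis unfolding h_def .
qed

lemma tele:
  assumes n: "1 \<le> n" and D: "Dn (Suc n) z \<noteq> 0"
  shows "(\<Sum>k=1..m. ss (Suc n) z k - ss n z k) = - (of_nat m - z) * pin (Suc n) z (Suc m) * hh z m / Dn (Suc n) z"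
proof (induction m)
  case 0
  have "pin (Suc n) z 1 = 0" by (rule pin_zero) (use n in auto)
  then show ?case by simp
next
  case (Suc m)
  define DD where "DD = Dn (Suc n) z"
  have "(\<Sum>k=1..Suc m. ss (Suc n) z k - ss n z k) = (\<Sum>k=1..m. ss (Suc n) z k - ss n z k) + (ss (Suc n) z (Suc m) - ss n z (Suc m))"
    by simp
  also have "\<dots> = (- (of_nat m - z) * pin (Suc n) z (Suc m) * hh z m + hh z (Suc m) * (-(of_nat (Suc m) - z) * pin (Suc n) z (Suc (Suc m)) + 2*(2*of_nat (Suc m) - 1) * pin (Suc n) z (Suc m))) / DD"
    unfolding Suc.IH using ss_diff[OF n D, of "Suc m"] D unfolding DD_def by (simp add: field_simps)
  also have "\<dots> = - (of_nat (Suc m) - z) * pin (Suc n) z (Suc (Suc m)) * hh z (Suc m) / DD"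
  proof -
    have key: "pin (Suc n) z (Suc m) * (2*(2*of_nat (Suc m) - 1) * hh z (Suc m) - (of_nat m - z) * hh z m) = 0"
    proof (cases "m = 0")
      case True
      have "pin (Suc n) z 1 = 0" by (rule pin_zero) (use n in auto)
      then show ?thesis using True by simp
    next
      case False
      have "of_nat (2*(2*m+1)) * hh z (Suc m) = (of_nat m - z) * hh z m" by (rule hh_rec) (use False in auto)
      moreover have "(2*(2*of_nat (Suc m) - 1) :: complex) = of_nat (2*(2*m+1))" by simp
      ultimately show ?thesis by simp
    qed
    show ?thesis using key by (simp add: algebra_simps divide_simps)
  qed
  finally show ?case unfolding DD_def .
qed


lemma hh_lim0: "(\<lambda>m. hh z m) \<longlonglongrightarrow> 0"
proof -
  define N where "N = Suc (nat \<lceil>norm z\<rceil>)"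
  have r: "norm (hh z (Suc m)) \<le> 1/2 * norm (hh z m)" if m: "m \<ge> N" for m
  proof -
    have m1: "1 \<le> m" using m unfolding N_def by simp
    have nzm: "norm z \<le> real m"
    proof -
      have "norm z \<le> real (nat \<lceil>norm z\<rceil>)" by linarith
      also have "\<dots> \<le> real m" using m unfolding N_def by simp
      finally show ?thesis .
    qed
    have e: "hh z (Suc m) = (of_nat m - z) * hh z m / of_nat (2*(2*m+1))"
    proof -
      have K: "(of_nat (2*(2*m+1)) :: complex) \<noteq> 0" by (simp only: of_nat_eq_0_iff) simp
      show ?thesis by (metis K hh_rec[OF m1] nonzero_mult_div_cancel_left)
    qed
    have "norm (hh z (Suc m)) = norm (of_nat m - z) * norm (hh z m) / real (2*(2*m+1))"
      unfolding e norm_divide norm_mult norm_of_nat ..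
    also have "\<dots> \<le> (2 * real m + 1) * norm (hh z m) / real (2*(2*m+1))"
    proof (intro divide_right_mono mult_right_mono)
      have "norm (of_nat m - z) \<le> norm (of_nat m :: complex) + norm z" by (rule norm_triangle_ineq4)
      then show "norm (of_nat m - z) \<le> 2 * real m + 1" using nzm by simp
    qed auto
    also have "\<dots> = 1/2 * norm (hh z m)" by (simp add: field_simps)
    finally show ?thesis .
  qed
  have "summable (\<lambda>m. hh z m)"
    by (rule summable_ratio_test[of "1/2" N]) (use r in auto)
  then show ?thesis by (rule summable_LIMSEQ_zero)
qed

lemma L_step:
  assumes "\<And>w. (\<lambda>m. \<phi> m * hh w m) \<longlonglongrightarrow> 0"
  shows "(\<lambda>m. (of_nat m + c) * \<phi> m * hh w m) \<longlonglongrightarrow> 0"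
proof -
  have "(\<lambda>m. (1 - w) * (\<phi> m * hh (w-1) m) + (w + c) * (\<phi> m * hh w m)) \<longlonglongrightarrow> 0"
    by (intro tendsto_add_zero tendsto_mult_right_zero assms)
  moreover have "eventually (\<lambda>m. (1 - w) * (\<phi> m * hh (w-1) m) + (w + c) * (\<phi> m * hh w m) = (of_nat m + c) * \<phi> m * hh w m) sequentially"
    unfolding eventually_sequentially
  proof (intro exI allI impI)
    fix m :: nat assume m: "m \<ge> 1"
    have eq: "(of_nat m - w) * hh w m = (1 - w) * hh (w - 1) m" by (rule hh_shift[OF m])
    have "(1 - w) * (\<phi> m * hh (w-1) m) = \<phi> m * ((1 - w) * hh (w-1) m)" by (simp only: mult_ac)
    also have "\<dots> = \<phi> m * ((of_nat m - w) * hh w m)" unfolding eq ..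
    finally have eq2: "(1 - w) * (\<phi> m * hh (w-1) m) = \<phi> m * ((of_nat m - w) * hh w m)" .
    show "(1 - w) * (\<phi> m * hh (w-1) m) + (w + c) * (\<phi> m * hh w m) = (of_nat m + c) * \<phi> m * hh w m"
      unfolding eq2 by (simp add: algebra_simps)
  qed
  ultimately show ?thesis by (rule Lim_transform_eventually)
qed

lemma pin_lim: "(\<lambda>m. pin n z (Suc m) * hh w m) \<longlonglongrightarrow> 0"
proof (induction n arbitrary: w)
  case 0
  then show ?case using hh_lim0 by (simp add: pin_le1)
next
  case (Suc n)
  show ?case
  proof (cases "n = 0")
    case True
    then show ?thesis using hh_lim0 by (simp add: pin_le1)
  next
    case False
    then have n: "1 \<le> n" by simp
    define c1 where "c1 = 1 - of_nat n + z"
    define c2 where "c2 = 1 - (of_nat n :: complex)"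
    have a: "(\<lambda>m. (of_nat m + c1) * pin n z (Suc m) * hh w m) \<longlonglongrightarrow> 0" for w
      by (rule L_step) (rule Suc.IH)
    have b: "(\<lambda>m. (of_nat m + c2) * ((of_nat m + c1) * pin n z (Suc m)) * hh w m) \<longlonglongrightarrow> 0"
      by (rule L_step) (use a in \<open>simp add: mult.assoc\<close>)
    have e: "(of_nat m + c2) * ((of_nat m + c1) * pin n z (Suc m)) * hh w m = pin (Suc n) z (Suc m) * hh w m" for m
      unfolding pin_Suc[OF n] c1_def c2_def by (simp add: algebra_simps)
    show ?thesis using b unfolding e .
  qed
qed

lemma G_lim:
  "(\<lambda>m. - (of_nat m - z) * pin n z (Suc m) * hh z m / D) \<longlonglongrightarrow> 0"
proof -
  have "(\<lambda>m. (of_nat m + (-z)) * pin n z (Suc m) * hh z m) \<longlonglongrightarrow> 0"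
    by (rule L_step) (rule pin_lim)
  then have "(\<lambda>m. (-1/D) * ((of_nat m + (-z)) * pin n z (Suc m) * hh z m)) \<longlonglongrightarrow> 0"
    by (rule tendsto_mult_right_zero)
  moreover have "(\<lambda>m. (-1/D) * ((of_nat m + (-z)) * pin n z (Suc m) * hh z m)) = (\<lambda>m. - (of_nat m - z) * pin n z (Suc m) * hh z m / D)"
    by (rule ext) (simp add: divide_inverse algebra_simps)
  ultimately show ?thesis by simp
qed


lemma psum_gen: "(\<Sum>k<Suc m. (if k = 0 then 0 else g k)) = (\<Sum>k=1..m. g k)"
proof -
  have "(\<Sum>k<Suc m. (if k = 0 then 0 else g k)) = (\<Sum>k=0..m. (if k = 0 then 0 else g k))"
    by (simp add: lessThan_Suc_atMost atLeast0AtMost)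
  also have "\<dots> = (if 0 = (0::nat) then 0 else g 0) + (\<Sum>k=Suc 0..m. (if k = 0 then 0 else g k))"
    by (rule sum.atLeast_Suc_atMost) simp
  also have "(\<Sum>k=Suc 0..m. (if k = 0 then 0 else g k)) = (\<Sum>k=1..m. g k)"
    by (intro sum.cong) auto
  finally show ?thesis by simp
qed

lemma sums_gen:
  fixes g :: "nat \<Rightarrow> complex"
  assumes "(\<lambda>m. \<Sum>k=1..m. g k) \<longlonglongrightarrow> l"
  shows "(\<lambda>k. if k = 0 then 0 else g k) sums l"
  unfolding sums_def by (rule LIMSEQ_imp_Suc) (simp only: psum_gen assms)

lemma base1: "ff 1 z sums 1"
proof -
  have ss1: "ss 1 z k = (3 * of_nat k - 2 + z) * hh z k" for k
    unfolding ss_def by (simp add: pin_le1 Dn_def)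
  have ps: "(\<Sum>k=1..m. ss 1 z k) = 1 - (of_nat m - z) * hh z m" if "1 \<le> m" for m
    using that
  proof (induction m rule: nat_induct_at_least)
    case base
    have "hh z 1 = 1/2" unfolding hh_def by simp
    then show ?case unfolding ss1 by (simp add: field_simps)
  next
    case (Suc m)
    have r: "of_nat (2*(2*m+1)) * hh z (Suc m) = (of_nat m - z) * hh z m" by (rule hh_rec) (use Suc in auto)
    have "(\<Sum>k=1..Suc m. ss 1 z k) = 1 - (of_nat m - z) * hh z m + (3 * of_nat (Suc m) - 2 + z) * hh z (Suc m)"
      using Suc.IH ss1[of "Suc m"] by simp
    also have "\<dots> = 1 - (of_nat (Suc m) - z) * hh z (Suc m)"
      unfolding r[symmetric] by (simp add: algebra_simps)
    finally show ?case .
  qed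
  have "(\<lambda>m. (of_nat m + (-z)) * 1 * hh z m) \<longlonglongrightarrow> 0"
    by (rule L_step) (simp add: hh_lim0)
  then have "(\<lambda>m. 1 - (of_nat m - z) * hh z m) \<longlonglongrightarrow> 1 - 0"
    by (intro tendsto_diff tendsto_const) simp
  then have lim: "(\<lambda>m. 1 - (of_nat m - z) * hh z m) \<longlonglongrightarrow> 1" by simp
  have ev: "eventually (\<lambda>m. 1 - (of_nat m - z) * hh z m = (\<Sum>k=1..m. ss 1 z k)) sequentially"
    by (rule eventually_sequentiallyI[of 1]) (use ps in auto)
  have "(\<lambda>m. \<Sum>k=1..m. ss 1 z k) \<longlonglongrightarrow> 1"
    by (rule Lim_transform_eventually[OF lim ev])
  then show ?thesis unfolding ff_def[abs_def] by (rule sums_gen)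
qed

lemma main_sums: "1 \<le> n \<Longrightarrow> Dn n z \<noteq> 0 \<Longrightarrow> ff n z sums 1"
proof (induction n rule: nat_induct_at_least)
  case base
  then show ?case using base1 by simp
next
  case (Suc n)
  have D: "Dn (Suc n) z \<noteq> 0" by fact
  then have "Dn n z \<noteq> 0" using Dn_Suc[OF Suc.hyps] by auto
  then have IH: "ff n z sums 1" by (rule Suc.IH)
  have "(\<lambda>m. \<Sum>k=1..m. ss (Suc n) z k - ss n z k) \<longlonglongrightarrow> 0"
    unfolding tele[OF Suc.hyps D] by (rule G_lim)
  then have "(\<lambda>k. if k = 0 then 0 else ss (Suc n) z k - ss n z k) sums 0" by (rule sums_gen)
  moreover have "(\<lambda>k. if k = 0 then 0 else ss (Suc n) z k - ss n z k) = (\<lambda>k. ff (Suc n) z k - ff n z k)"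
    by (auto simp: ff_def)
  ultimately have "(\<lambda>k. ff (Suc n) z k - ff n z k) sums 0" by simp
  from sums_add[OF IH this] show ?case by simp
qed


lemma pin_diag: "1 \<le> n \<Longrightarrow> pin n z n = fact (n-1) * pochhammer (1+z) (n-1)"
proof (induction n rule: nat_induct_at_least)
  case base
  then show ?case by (simp add: pin_le1)
next
  case (Suc n)
  have "pin (Suc n) z (Suc n) = of_nat n * (of_nat n + z) * pin n z n" by (rule pin_shift) fact
  also have "\<dots> = of_nat n * (of_nat n + z) * (fact (n-1) * pochhammer (1+z) (n-1))" unfolding Suc.IH ..
  also have "\<dots> = fact (Suc n - 1) * pochhammer (1+z) (Suc n - 1)"
  proof -
    obtain n' where n': "n = Suc n'" using Suc.hyps by (cases n) auto
    show ?thesis unfolding n' by (simp add: pochhammer_Suc algebra_simps)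
  qed
  finally show ?case .
qed

lemma Den_base:
  "(\<Prod>j\<in>{1..n}-{n}. (of_nat j - of_nat n) * (of_nat j - of_nat n + z)) = Dn n z"
proof -
  have S: "{1..n}-{n} = {1..<n}" by auto
  show ?thesis unfolding S Dn_def
  proof (rule prod.reindex_bij_witness[of _ "\<lambda>b. n - b" "\<lambda>a. n - a"])
    fix a assume a: "a \<in> {1..<n}"
    then show "n - (n - a) = a" "n - a \<in> {1..<n}" by auto
    have s: "(of_nat (n - a) :: complex) = of_nat n - of_nat a" using a by (simp add: of_nat_diff)
    show "of_nat (n - a) * (of_nat (n - a) - z) = (of_nat a - of_nat n) * (of_nat a - of_nat n + z)"
      unfolding s by (simp add: algebra_simps)
  next
    fix b assume b: "b \<in> {1..<n}"
    then show "n - (n - b) = b" "n - b \<in> {1..<n}" by auto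
  qed
qed

lemma ident_I:
  assumes n: "1 \<le> n"
  shows "(\<Prod>j=1..(n+t)-1. (of_nat j)^2 - z^2) * Dn n z * fact ((n+t)-1) =
    (\<Prod>j\<in>{1..n+t}-{n}. (of_nat j - of_nat n) * (of_nat j - of_nat n + z)) * pin n z (n+t) * pochhammer (1-z) ((n+t)-1)"
proof (induction t)
  case 0
  have Q: "(\<Prod>j=1..n-1. (of_nat j)^2 - z^2) = pochhammer (1 - z) (n-1) * pochhammer (1 + z) (n-1)"
    by (rule Qprod)
  show ?case unfolding add_0_right Q Den_base pin_diag[OF n] by (simp add: mult_ac)
next
  case (Suc t)
  define k where "k = n + t"
  have k1: "1 \<le> k" and kn: "n \<le> k" unfolding k_def using n by auto
  obtain k' where k': "k = Suc k'" using k1 by (cases k) auto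
  have IH: "(\<Prod>j=1..k-1. (of_nat j)^2 - z^2) * Dn n z * fact (k-1) =
    (\<Prod>j\<in>{1..k}-{n}. (of_nat j - of_nat n) * (of_nat j - of_nat n + z)) * pin n z k * pochhammer (1-z) (k-1)"
    using Suc.IH unfolding k_def .
  have e1: "n + Suc t = Suc k" unfolding k_def by simp
  have Qs: "(\<Prod>j=1..Suc k - 1. (of_nat j)^2 - z^2) = (\<Prod>j=1..k-1. (of_nat j)^2 - z^2) * ((of_nat k)^2 - z^2)"
    unfolding k' by (simp add: prod.nat_ivl_Suc' mult.commute)
  have F: "fact (Suc k - 1) = (fact (k-1) :: complex) * of_nat k"
    unfolding k' by simp
  have Ds: "{1..Suc k}-{n} = insert (Suc k) ({1..k}-{n})" using kn by auto
  have Dd: "(\<Prod>j\<in>{1..Suc k}-{n}. (of_nat j - of_nat n) * (of_nat j - of_nat n + z)) =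
      ((of_nat (Suc k) - of_nat n) * (of_nat (Suc k) - of_nat n + z)) * (\<Prod>j\<in>{1..k}-{n}. (of_nat j - of_nat n) * (of_nat j - of_nat n + z))"
    unfolding Ds by (rule prod.insert) auto
  have Ps: "pin n z (Suc k) * ((of_nat (Suc k) - of_nat n) * (of_nat (Suc k) - of_nat n + z)) = of_nat k * (of_nat k + z) * pin n z k"
  proof (cases "n = 1")
    case True
    then show ?thesis by (simp add: pin_le1)
  next
    case False
    then have n1: "1 \<le> n - 1" using n by simp
    have "pin (Suc (n-1)) z (Suc k) = of_nat k * (of_nat k + z) * pin (n-1) z k" by (rule pin_shift[OF n1])
    moreover have "pin (Suc (n-1)) z (Suc k) = pin (n-1) z (Suc k) * ((of_nat (Suc k) - of_nat (n-1)) * (of_nat (Suc k) - of_nat (n-1) + z))"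
      by (rule pin_Suc[OF n1])
    moreover have "pin (Suc (n-1)) z k = pin (n-1) z k * ((of_nat k - of_nat (n-1)) * (of_nat k - of_nat (n-1) + z))"
      by (rule pin_Suc[OF n1])
    moreover have "Suc (n-1) = n" using n by simp
    moreover have "(of_nat (n-1) :: complex) = of_nat n - 1" using n by (simp add: of_nat_diff)
    ultimately have A: "pin n z (Suc k) = of_nat k * (of_nat k + z) * pin (n-1) z k"
      and B: "pin n z k = pin (n-1) z k * ((of_nat k - (of_nat n - 1)) * (of_nat k - (of_nat n - 1) + z))"
      by simp_all
    show ?thesis unfolding A B by (simp add: algebra_simps)
  qed
  have Po: "pochhammer (1-z) (Suc k - 1) = pochhammer (1-z) (k-1) * (of_nat k - z)"
    unfolding k' by (simp add: pochhammer_Suc)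
  have sq: "(of_nat k)^2 - z^2 = (of_nat k - z) * (of_nat k + z)" by (simp add: power2_eq_square algebra_simps)
  show ?case unfolding e1 Qs F Dd Po
  proof -
    have "(\<Prod>j=1..k-1. (of_nat j)^2 - z^2) * ((of_nat k)^2 - z^2) * Dn n z * (fact (k - 1) * of_nat k)
      = ((\<Prod>j=1..k-1. (of_nat j)^2 - z^2) * Dn n z * fact (k-1)) * (of_nat k * (of_nat k + z) * (of_nat k - z))"
      unfolding sq by (simp only: mult_ac)
    also have "\<dots> = (\<Prod>j\<in>{1..k}-{n}. (of_nat j - of_nat n) * (of_nat j - of_nat n + z)) * (of_nat k * (of_nat k + z) * pin n z k) * (pochhammer (1-z) (k-1) * (of_nat k - z))"
      unfolding IH by (simp only: mult_ac)
    also have "\<dots> = (\<Prod>j\<in>{1..k}-{n}. (of_nat j - of_nat n) * (of_nat j - of_nat n + z)) * (pin n z (Suc k) * ((of_nat (Suc k) - of_nat n) * (of_nat (Suc k) - of_nat n + z))) * (pochhammer (1-z) (k-1) * (of_nat k - z))"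
      unfolding Ps ..
    finally show "(\<Prod>j=1..k-1. (of_nat j)^2 - z^2) * ((of_nat k)^2 - z^2) * Dn n z * (fact (k - 1) * of_nat k) =
      (of_nat (Suc k) - of_nat n) * (of_nat (Suc k) - of_nat n + z) * (\<Prod>j\<in>{1..k}-{n}. (of_nat j - of_nat n) * (of_nat j - of_nat n + z)) * pin n z (Suc k) * (pochhammer (1-z) (k-1) * (of_nat k - z))"
      by (simp only: mult_ac)
  qed
qed

lemma part2:
  fixes n :: nat and z :: complex
  assumes n: "n \<ge> 1"
  assumes H: "\<forall>j. j \<ge> 1 \<and> j \<noteq> n \<longrightarrow> of_nat j - of_nat n + z \<noteq> 0"
  shows "(\<lambda>i. let k = i + n in
          (3 * of_nat k - 2 * of_nat n + z) / (of_nat k * of_nat ((2*k) choose k)) *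
          ((\<Prod>j=1..k-1. (of_nat j)^2 - z^2) /
           (\<Prod>j\<in>{1..k}-{n}. (of_nat j - of_nat n) * (of_nat j - of_nat n + z))))
      sums 1"
proof -
  have Dnz: "Dn n z \<noteq> 0"
    unfolding Dn_def
  proof (subst prod_zero_iff, simp, rule notI)
    assume "\<exists>m\<in>{1..<n}. of_nat m * (of_nat m - z) = 0"
    then obtain m where m: "m \<in> {1..<n}" "of_nat m * (of_nat m - z) = 0" by blast
    then have zm: "z = of_nat m" by simp
    have e0: "of_nat (n - m) - of_nat n + z = 0" using m(1) unfolding zm by (simp add: of_nat_diff)
    have "n - m \<ge> 1 \<and> n - m \<noteq> n" using m(1) by auto
    then have "of_nat (n - m) - of_nat n + z \<noteq> 0" using H by blast
    then show False using e0 by simp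
  qed
  have Dennz: "(\<Prod>j\<in>{1..k}-{n}. (of_nat j - of_nat n) * (of_nat j - of_nat n + z)) \<noteq> 0" for k
  proof (subst prod_zero_iff, simp, rule notI)
    assume "\<exists>j\<in>{1..k}-{n}. (of_nat j - of_nat n) * (of_nat j - of_nat n + z) = 0"
    then obtain j where j: "j \<in> {1..k}-{n}" "(of_nat j - of_nat n) * (of_nat j - of_nat n + z) = 0" by blast
    moreover have "(of_nat j - of_nat n :: complex) \<noteq> 0" using j(1) by auto
    ultimately show False using H[rule_format, of j] by auto
  qed
  have T: "(3 * of_nat k - 2 * of_nat n + z) / (of_nat k * of_nat ((2*k) choose k)) *
          ((\<Prod>j=1..k-1. (of_nat j)^2 - z^2) /
           (\<Prod>j\<in>{1..k}-{n}. (of_nat j - of_nat n) * (of_nat j - of_nat n + z))) = ss n z k"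
    if k: "n \<le> k" for k
  proof -
    define t where "t = k - n"
    have kt: "k = n + t" unfolding t_def using k by simp
    define Den where "Den = (\<Prod>j\<in>{1..k}-{n}. (of_nat j - of_nat n) * (of_nat j - of_nat n + z))"
    define Q where "Q = (\<Prod>j=1..k-1. (of_nat j)^2 - z^2)"
    have I: "Q * Dn n z * fact (k-1) = Den * pin n z k * pochhammer (1-z) (k-1)"
      unfolding Q_def Den_def kt by (rule ident_I[OF n])
    have Q: "Q = Den * pin n z k * pochhammer (1-z) (k-1) / (Dn n z * fact (k-1))"
      using I Dnz by (simp add: field_simps)
    have k1: "1 \<le> k" using k n by simp
    obtain k' where k': "k = Suc k'" using k1 by (cases k) auto
    have C: "(of_nat ((2*k) choose k) :: complex) = fact (2*k) / (fact k * fact k)"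
      by (simp add: binomial_fact mult_2)
    have fk: "(fact k :: complex) = of_nat k * fact (k-1)" unfolding k' by simp
    have knz: "(of_nat k :: complex) \<noteq> 0" using k1 by simp
    have Dn0: "Den \<noteq> 0" unfolding Den_def by (rule Dennz)
    show ?thesis unfolding ss_def hh_def Q_def[symmetric] Den_def[symmetric] Q C fk
      using Dnz Dn0 knz by (simp add: field_simps)
  qed
  have "ff n z sums 1" by (rule main_sums[OF n Dnz])
  then have "(\<lambda>i. ff n z (i + n)) sums 1"
  proof (subst sums_zero_iff_shift)
    fix i assume "i < n"
    then show "ff n z i = 0" unfolding ff_def ss_def using pin_zero[of i n z] by auto
  qed
  moreover have "(\<lambda>i. ff n z (i + n)) = (\<lambda>i. let k = i + n in
          (3 * of_nat k - 2 * of_nat n + z) / (of_nat k * of_nat ((2*k) choose k)) *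
          ((\<Prod>j=1..k-1. (of_nat j)^2 - z^2) /
           (\<Prod>j\<in>{1..k}-{n}. (of_nat j - of_nat n) * (of_nat j - of_nat n + z))))"
  proof (rule ext)
    fix i
    have "i + n \<noteq> 0" using n by simp
    then show "ff n z (i + n) = (let k = i + n in
          (3 * of_nat k - 2 * of_nat n + z) / (of_nat k * of_nat ((2*k) choose k)) *
          ((\<Prod>j=1..k-1. (of_nat j)^2 - z^2) /
           (\<Prod>j\<in>{1..k}-{n}. (of_nat j - of_nat n) * (of_nat j - of_nat n + z))))"
      unfolding Let_def ff_def using T[of "i+n"] n by auto
  qed
  ultimately show ?thesis by simp
qed

theorem mainTheorem2:
  fixes n :: nat and z :: complex
  assumes "n \<ge> 1"
  shows
   "((\<forall>j\<in>{1..n}. (of_nat j)^2 - z^2 \<noteq> 0) \<and> of_nat n - z \<noteq> 0 \<longrightarrow>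
      (\<Sum>k=1..n. of_nat ((2*k) choose k) * (3 * of_nat k - 2 * of_nat n + z) *
          ((\<Prod>j=1..k-1. (of_nat j - of_nat n) * (of_nat j - of_nat n + z)) /
           (\<Prod>j=1..k. (of_nat j)^2 - z^2)))
      = 2 / (of_nat n - z))
    \<and>
    ((\<forall>j. j \<ge> 1 \<and> j \<noteq> n \<longrightarrow> of_nat j - of_nat n + z \<noteq> 0) \<longrightarrow>
      (\<lambda>i. let k = i + n in
          (3 * of_nat k - 2 * of_nat n + z) / (of_nat k * of_nat ((2*k) choose k)) *
          ((\<Prod>j=1..k-1. (of_nat j)^2 - z^2) /
           (\<Prod>j\<in>{1..k}-{n}. (of_nat j - of_nat n) * (of_nat j - of_nat n + z))))
      sums 1)"
  proof (intro conjI impI)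
  assume "(\<forall>j\<in>{1..n}. (of_nat j)^2 - z^2 \<noteq> 0) \<and> of_nat n - z \<noteq> 0"
  then show "(\<Sum>k=1..n. of_nat ((2*k) choose k) * (3 * of_nat k - 2 * of_nat n + z) *
          ((\<Prod>j=1..k-1. (of_nat j - of_nat n) * (of_nat j - of_nat n + z)) /
           (\<Prod>j=1..k. (of_nat j)^2 - z^2)))
      = 2 / (of_nat n - z)"
    using part1[OF assms] by blast
next
  assume "\<forall>j. j \<ge> 1 \<and> j \<noteq> n \<longrightarrow> of_nat j - of_nat n + z \<noteq> 0"
  then show "(\<lambda>i. let k = i + n in
          (3 * of_nat k - 2 * of_nat n + z) / (of_nat k * of_nat ((2*k) choose k)) *
          ((\<Prod>j=1..k-1. (of_nat j)^2 - z^2) /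
           (\<Prod>j\<in>{1..k}-{n}. (of_nat j - of_nat n) * (of_nat j - of_nat n + z))))
      sums 1"
    by (rule part2[OF assms])
qed

end
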